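(* Let $T\colon R^{p,0}_\omega\to R^{p,0}_\omega$ be a bounded linear operator, let $M,N\in\mathbb N$ with $M>N$ and $\mathcal B\subseteq\mathcal D^N$. On $\{-1,1\}^{\mathcal B}$ with the uniform probability, let $b(\theta)=\sum_{K\in\mathcal B}\theta_Kh^M_K$ and $Z(\theta)=\langle b(\theta),Tb(\theta)\rangle-\sum_{K\in\mathcal B}\langle h^M_K,Th^M_K\rangle$. Then $\mathbb E(Z)=0$ and $\mathrm{Var}(Z)\le2\|T\|^2\,|\bigcup\mathcal B|^{1/p+1}\,2^{-N/q}$, where $|\bigcup\mathcal B|$ is the Lebesgue measure of the union of the intervals in $\mathcal B$.
   Context: Fix $1<p<\infty$, $q=p/(p-1)$, $p^*=\max\{p,q\}$. All $L_r$ spaces are over $[0,1]$ with Lebesgue measure and $\langle g,f\rangle=\int_0^1gf$. A dyadic interval is $[(i-1)2^{-n},i2^{-n})$, $n\ge0$, $1\le i\le2^n$; $\mathcal D^n$ is the set of those of length $2^{-n}$ and $\mathcal D_n=\bigcup_{k=0}^n\mathcal D^k$. For a dyadic interval $I$, $I^+,I^-$ are its left and right halves and $h_I=\chi_{I^+}-\chi_{I^-}$. For each $n\in\mathbb N$ a family $(h^n_I)_{I\in\mathcal D_{n-1}}$ in $L_p$ is fixed with the same joint distribution as $(h_I)_{I\in\mathcal D_{n-1}}$, such that the $\sigma$-algebras $\sigma(h^n_I:I\in\mathcal D_{n-1})$, $n\in\mathbb N$, are independent. Let $\mathcal D_\omega=\{(n,I):n\in\mathbb N,I\in\mathcal D_{n-1}\}$,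 linearly ordered by $(m,J)\prec(n,I)$ iff $m<n$, or $m=n$ and $J$ precedes $I$ in $\mathcal D_{m-1}$ (intervals ordered first by level, coarser first, then from left to right). $R^{p,0}_\omega$ is the closed linear span of $\{h^n_I:(n,I)\in\mathcal D_\omega\}$ in $L_p$ (a distributional copy of the mean-zero hyperplane of the Bourgain–Rosenthal–Schechtman space $R^p_\omega$); $(h^n_I)_{(n,I)\in\mathcal D_\omega}$, in the order $\prec$, is an unconditional basis of it. *)

theory Defs
  imports "HOL-Probability.Probability"
begin

definition lmeas :: "real measure" where
  "lmeas = lebesgue_on {0..1}"

text \<open>Dyadic intervals are encoded as pairs (n,i) with 1 \<le> i \<le> 2^n, standing for
  [(i-1) 2^-n, i 2^-n).\<close>
definition dyadic_level :: "nat \<Rightarrow> (nat \<times> nat) set" where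
  "dyadic_level n = {(n, i) | i. 1 \<le> i \<and> i \<le> 2 ^ n}"

definition dyadic_upto :: "nat \<Rightarrow> (nat \<times> nat) set" where
  "dyadic_upto n = (\<Union>k\<le>n. dyadic_level k)"

definition dyint :: "nat \<times> nat \<Rightarrow> real set" where
  "dyint I = {(real (snd I) - 1) / 2 ^ fst I ..< real (snd I) / 2 ^ fst I}"

definition dyint_left :: "nat \<times> nat \<Rightarrow> real set" where
  "dyint_left I = {(real (snd I) - 1) / 2 ^ fst I ..< (2 * real (snd I) - 1) / 2 ^ (fst I + 1)}"

definition dyint_right :: "nat \<times> nat \<Rightarrow> real set" where
  "dyint_right I = {(2 * real (snd I) - 1) / 2 ^ (fst I + 1) ..< real (snd I) / 2 ^ fst I}"

definition haar :: "nat \<times> nat \<Rightarrow> real \<Rightarrow> real" where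
  "haar I x = indicator (dyint_left I) x - indicator (dyint_right I) x"

definition Lp_norm :: "real \<Rightarrow> (real \<Rightarrow> real) \<Rightarrow> real" where
  "Lp_norm p f = (\<integral>x. \<bar>f x\<bar> powr p \<partial>lmeas) powr (1 / p)"

definition in_Lp :: "real \<Rightarrow> (real \<Rightarrow> real) \<Rightarrow> bool" where
  "in_Lp p f \<longleftrightarrow> f \<in> borel_measurable lmeas \<and> integrable lmeas (\<lambda>x. \<bar>f x\<bar> powr p)"

definition pairing :: "(real \<Rightarrow> real) \<Rightarrow> (real \<Rightarrow> real) \<Rightarrow> real" where
  "pairing g f = (\<integral>x. g x * f x \<partial>lmeas)"

definition D_omega :: "(nat \<times> (nat \<times> nat)) set" where
  "D_omega = {(n, I) | n I. 1 \<le> n \<and> I \<in> dyadic_upto (n - 1)}"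

definition haar_copies :: "(nat \<Rightarrow> nat \<times> nat \<Rightarrow> real \<Rightarrow> real) \<Rightarrow> bool" where
  "haar_copies hh \<longleftrightarrow>
     (\<forall>n\<ge>1. \<forall>I\<in>dyadic_upto (n - 1). hh n I \<in> borel_measurable lmeas) \<and>
     (\<forall>n\<ge>1. distr lmeas (PiM (dyadic_upto (n - 1)) (\<lambda>_. borel))
                 (\<lambda>x. \<lambda>I\<in>dyadic_upto (n - 1). hh n I x)
            = distr lmeas (PiM (dyadic_upto (n - 1)) (\<lambda>_. borel))
                 (\<lambda>x. \<lambda>I\<in>dyadic_upto (n - 1). haar I x)) \<and>
     prob_space.indep_vars lmeas (\<lambda>n. PiM (dyadic_upto (n - 1)) (\<lambda>_. borel))
        (\<lambda>n x. \<lambda>I\<in>dyadic_upto (n - 1). hh n I x) {1..}"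

definition lin_span_hh :: "(nat \<Rightarrow> nat \<times> nat \<Rightarrow> real \<Rightarrow> real) \<Rightarrow> (real \<Rightarrow> real) set" where
  "lin_span_hh hh = {(\<lambda>x. \<Sum>j\<in>S. c j * hh (fst j) (snd j) x) | S c. finite S \<and> S \<subseteq> D_omega}"

definition Rp0 :: "real \<Rightarrow> (nat \<Rightarrow> nat \<times> nat \<Rightarrow> real \<Rightarrow> real) \<Rightarrow> (real \<Rightarrow> real) set" where
  "Rp0 p hh = {f. in_Lp p f \<and>
      (\<forall>e>0. \<exists>g\<in>lin_span_hh hh. Lp_norm p (\<lambda>x. f x - g x) < e)}"

definition bounded_linear_on :: "real \<Rightarrow> (real \<Rightarrow> real) set \<Rightarrow> ((real \<Rightarrow> real) \<Rightarrow> (real \<Rightarrow> real)) \<Rightarrow> bool" where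
  "bounded_linear_on p X T \<longleftrightarrow>
     (\<forall>f\<in>X. T f \<in> X) \<and>
     (\<forall>f\<in>X. \<forall>g\<in>X. \<forall>a b::real. T (\<lambda>x. a * f x + b * g x) = (\<lambda>x. a * T f x + b * T g x)) \<and>
     (\<exists>C. \<forall>f\<in>X. Lp_norm p (T f) \<le> C * Lp_norm p f)"

definition op_norm :: "real \<Rightarrow> (real \<Rightarrow> real) set \<Rightarrow> ((real \<Rightarrow> real) \<Rightarrow> (real \<Rightarrow> real)) \<Rightarrow> real" where
  "op_norm p X T = Sup {Lp_norm p (T f) | f. f \<in> X \<and> Lp_norm p f \<le> 1}"

definition sign_avg :: "(nat \<times> nat) set \<Rightarrow> ((nat \<times> nat \<Rightarrow> real) \<Rightarrow> real) \<Rightarrow> real" where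
  "sign_avg B Z = (\<Sum>\<theta>\<in>B \<rightarrow>\<^sub>E {-1, 1}. Z \<theta>) / real (card (B \<rightarrow>\<^sub>E ({-1, 1} :: real set)))"

definition sign_var :: "(nat \<times> nat) set \<Rightarrow> ((nat \<times> nat \<Rightarrow> real) \<Rightarrow> real) \<Rightarrow> real" where
  "sign_var B Z = sign_avg B (\<lambda>\<theta>. (Z \<theta> - sign_avg B Z)\<^sup>2)"

end

theory Submission
  imports Defs
begin

lemma dyint_eq: "K \<in> dyadic_level N \<Longrightarrow> \<exists>i. K = (N,i) \<and> 1 \<le> i \<and> i \<le> 2^N"
  by (auto simp: dyadic_level_def)

lemma haar_abs:
  shows "\<bar>haar K x\<bar> = indicator (dyint K) x"
proof -
  obtain n i where K: "K = (n,i)" by force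
  have e: "(2::real)^(n+1) = 2 * 2^n" by simp
  show ?thesis unfolding K haar_def dyint_def dyint_left_def dyint_right_def
    by (auto simp: indicator_def e field_simps)
qed

lemma dyint_sub: "K \<in> dyadic_level N \<Longrightarrow> dyint K \<subseteq> {0..1}"
proof
  fix x assume K: "K \<in> dyadic_level N" and x: "x \<in> dyint K"
  then obtain i where K: "K = (N,i)" "1 \<le> i" "i \<le> 2^N" by (auto simp: dyadic_level_def)
  have p: "(0::real) < 2^N" by simp
  have "real i - 1 \<le> x * 2^N" "x * 2^N < real i" using x p unfolding K dyint_def by (auto simp: field_simps)
  moreover have "real i \<le> 2^N" using K by (metis of_nat_le_iff of_nat_numeral of_nat_power)
  moreover have "(1::real) \<le> real i" using K by simp
  ultimately have "0 \<le> x * 2^N" "x * 2^N \<le> 1 * 2^N" by linarith+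
  then show "x \<in> {0..1}" using p by (simp add: zero_le_mult_iff mult_le_cancel_right)
qed

lemma dyint_disj: "K \<in> dyadic_level N \<Longrightarrow> L \<in> dyadic_level N \<Longrightarrow> x \<in> dyint K \<Longrightarrow> x \<in> dyint L \<Longrightarrow> K = L"
proof -
  assume a: "K \<in> dyadic_level N" "L \<in> dyadic_level N" "x \<in> dyint K" "x \<in> dyint L"
  then obtain i j where K: "K = (N,i)" and L: "L = (N,j)" by (auto simp: dyadic_level_def)
  have p: "(0::real) < 2^N" by simp
  from a have "real i - 1 \<le> x * 2^N" "x * 2^N < real i" "real j - 1 \<le> x * 2^N" "x * 2^N < real j"
    unfolding K L dyint_def using p by (auto simp: field_simps)
  then have "i = j" by linarith
  then show ?thesis using K L by simp
qed

lemma borel_lmeas: "f \<in> borel_measurable borel \<Longrightarrow> f \<in> borel_measurable lmeas"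
  using measurable_comp[OF id_borel_measurable_lebesgue_on[of "{0..1}"], of f borel] unfolding lmeas_def by simp

lemma haar_meas: "haar K \<in> borel_measurable lmeas"
  apply (rule borel_lmeas)
  unfolding haar_def dyint_left_def dyint_right_def
  by measurable

lemma measure_lmeas: "A \<in> sets borel \<Longrightarrow> A \<subseteq> {0..1} \<Longrightarrow> measure lmeas A = measure lborel A"
  unfolding lmeas_def
  by (simp add: measure_restrict_space measure_completion)

lemma measure_dyint: "K \<in> dyadic_level N \<Longrightarrow> measure lborel (dyint K) = 1 / 2^N"
  by (auto simp: dyadic_level_def dyint_def field_simps)

lemma haar_zero: "x \<notin> dyint K \<Longrightarrow> haar K x = 0"
  using haar_abs[of K x] by (simp add: indicator_def)

lemma haar_sum:
  assumes S: "S \<subseteq> dyadic_level N" "finite S" and eps: "\<And>K. K \<in> S \<Longrightarrow> \<bar>\<epsilon> K\<bar> = (1::real)"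
    and r: "r > 0"
  shows "\<bar>\<Sum>K\<in>S. \<epsilon> K * haar K x\<bar> powr r = (\<Sum>K\<in>S. indicator (dyint K) x)"
proof (cases "\<exists>K0\<in>S. x \<in> dyint K0")
  case True
  then obtain K0 where K0: "K0 \<in> S" "x \<in> dyint K0" by blast
  have u: "\<And>K. K \<in> S \<Longrightarrow> x \<in> dyint K \<Longrightarrow> K = K0"
    using dyint_disj K0 S by blast
  have e1: "(\<Sum>K\<in>S. \<epsilon> K * haar K x) = (\<Sum>K\<in>S. if K = K0 then \<epsilon> K0 * haar K0 x else 0)"
  proof (rule sum.cong)
    fix K assume K: "K \<in> S"
    show "\<epsilon> K * haar K x = (if K = K0 then \<epsilon> K0 * haar K0 x else 0)"
    proof (cases "K = K0")
      case False
      then have "x \<notin> dyint K" using u K by blast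
      then show ?thesis using False by (simp add: haar_zero)
    qed simp
  qed simp
  have e2: "(\<Sum>K\<in>S. indicator (dyint K) x) = (\<Sum>K\<in>S. if K = K0 then (1::real) else 0)"
    by (rule sum.cong) (auto dest: u simp: K0 indicator_def)
  have "\<bar>\<epsilon> K0 * haar K0 x\<bar> = 1" using eps[OF K0(1)] haar_abs[of K0 x] K0 by (simp add: abs_mult)
  then show ?thesis unfolding e1 e2 using K0 S by simp
next
  case False
  then have e1: "(\<Sum>K\<in>S. \<epsilon> K * haar K x) = 0" by (auto intro!: sum.neutral simp: haar_zero)
  have e2: "(\<Sum>K\<in>S. indicator (dyint K) x) = (0::real)" using False by (auto intro!: sum.neutral simp: indicator_def)
  show ?thesis unfolding e1 e2 by simp
qed

lemma haar_bound: "\<bar>\<Sum>K\<in>S. c K * haar K x\<bar> \<le> (\<Sum>K\<in>S. \<bar>c K\<bar>)"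
proof -
  have "\<bar>\<Sum>K\<in>S. c K * haar K x\<bar> \<le> (\<Sum>K\<in>S. \<bar>c K * haar K x\<bar>)" by (rule sum_abs)
  also have "\<dots> \<le> (\<Sum>K\<in>S. \<bar>c K\<bar>)"
    by (rule sum_mono) (auto simp: abs_mult haar_abs indicator_def)
  finally show ?thesis .
qed

lemma fin_lmeas: "finite_measure lmeas"
  unfolding lmeas_def by (rule finite_measure_lebesgue_on) auto

lemma dyint_borel[measurable]: "dyint K \<in> sets borel"
  unfolding dyint_def by simp

lemma integral_indic_sum:
  assumes S: "S \<subseteq> dyadic_level N" "finite S"
  shows "integrable lmeas (\<lambda>x. \<Sum>K\<in>S. indicator (dyint K) x :: real)"
    and "(\<integral>x. (\<Sum>K\<in>S. indicator (dyint K) x :: real) \<partial>lmeas) = real (card S) / 2^N"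
proof -
  interpret finite_measure lmeas by (rule fin_lmeas)
  have sets: "dyint K \<in> sets lmeas" if K: "K \<in> S" for K
  proof -
    have "indicator (dyint K) \<in> (borel_measurable lmeas :: (real \<Rightarrow> real) set)"
      by (rule borel_lmeas) simp
    then have "dyint K \<inter> space lmeas \<in> sets lmeas" by (simp only: borel_measurable_indicator_iff)
    moreover have "dyint K \<inter> space lmeas = dyint K" using dyint_sub[of K N] S K by (auto simp: lmeas_def)
    ultimately show ?thesis by simp
  qed
  have int1: "integrable lmeas (indicator (dyint K) :: real \<Rightarrow> real)" if "K \<in> S" for K
      using sets that by (intro integrable_real_indicator) (auto simp: less_top[symmetric])
  show "integrable lmeas (\<lambda>x. \<Sum>K\<in>S. indicator (dyint K) x :: real)"
    using int1 by (rule Bochner_Integration.integrable_sum)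
  have "(\<integral>x. (\<Sum>K\<in>S. indicator (dyint K) x :: real) \<partial>lmeas) = (\<Sum>K\<in>S. measure lmeas (dyint K \<inter> space lmeas))"
    using int1 by (subst Bochner_Integration.integral_sum) auto
  also have "\<dots> = (\<Sum>K\<in>S. 1 / 2^N)"
  proof (rule sum.cong)
    fix K assume K: "K \<in> S"
    then have "dyint K \<inter> space lmeas = dyint K" using dyint_sub[of K N] S by (auto simp: lmeas_def)
    then show "measure lmeas (dyint K \<inter> space lmeas) = 1 / 2^N"
      using measure_lmeas[of "dyint K"] dyint_sub[of K N] measure_dyint[of K N] K S by auto
  qed simp
  finally show "(\<integral>x. (\<Sum>K\<in>S. indicator (dyint K) x :: real) \<partial>lmeas) = real (card S) / 2^N" by simp
qed

lemma emeasure_dyint: "emeasure lborel (dyint K) = ennreal (1 / 2^(fst K))"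
proof -
  have "(real (snd K) - 1) / 2 ^ fst K \<le> real (snd K) / 2 ^ fst K" by (simp add: divide_right_mono)
  then show ?thesis unfolding dyint_def by (simp add: diff_divide_distrib)
qed

lemma measure_union:
  assumes S: "S \<subseteq> dyadic_level N" "finite S"
  shows "measure lborel (\<Union>K\<in>S. dyint K) = real (card S) / 2^N"
proof -
  have "measure lborel (\<Union>K\<in>S. dyint K) = (\<Sum>K\<in>S. measure lborel (dyint K))"
  proof (rule measure_finite_Union)
    show "disjoint_family_on dyint S" unfolding disjoint_family_on_def
      using S dyint_disj[of _ N] by blast
  qed (use S in \<open>auto simp: emeasure_dyint\<close>)
  also have "\<dots> = (\<Sum>K\<in>S. 1/2^N)" using S measure_dyint[of _ N] by (intro sum.cong) auto
  finally show ?thesis by simp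
qed


lemma powr_limit_le:
  fixes F G a b X :: real
  assumes "\<And>d. d > 0 \<Longrightarrow> X \<le> (F + d) powr a * (G + d) powr b"
    and "F \<ge> 0" "G \<ge> 0" "a > 0" "b > 0"
  shows "X \<le> F powr a * G powr b"
proof -
  have t: "((\<lambda>d. (F + d) powr a * (G + d) powr b) \<longlongrightarrow> (F + 0) powr a * (G + 0) powr b) (at_right 0)"
    using assms
    by (intro tendsto_intros tendsto_powr') (auto simp: eventually_at_right_less eventually_at_filter
        intro!: eventually_mono[OF eventually_at_right_less])
  have "X \<le> (F + 0) powr a * (G + 0) powr b"
  proof (rule tendsto_le[OF _ t tendsto_const])
    show "\<forall>\<^sub>F d in at_right 0. X \<le> (F + d) powr a * (G + d) powr b"
      using assms(1) eventually_at_right_less[of 0] by (auto elim: eventually_mono)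
  qed simp
  then show ?thesis by simp
qed

lemma young_pt:
  fixes a b p q :: real
  assumes "p > 1" "q = p / (p - 1)" "a \<ge> 0" "b \<ge> 0"
  shows "a * b \<le> a powr q / q + b powr p / p"
proof -
  have "p - 1 > 0" using assms by simp
  then have "q > 1" using assms by (simp add: less_divide_eq)
  moreover have "1/q + 1/p = 1"
  proof -
    have "1/q = (p-1)/p" using assms by simp
    then show ?thesis using assms by (simp add: add_divide_distrib[symmetric])
  qed
  ultimately show ?thesis using Youngs_inequality[of q p a b] assms by simp
qed

lemma holder:
  fixes f g :: "real \<Rightarrow> real" and p q :: real
  assumes p: "p > 1" and q: "q = p / (p - 1)"
    and fm: "f \<in> borel_measurable lmeas" and gm: "g \<in> borel_measurable lmeas"
    and fi: "integrable lmeas (\<lambda>x. \<bar>f x\<bar> powr q)" and gi: "integrable lmeas (\<lambda>x. \<bar>g x\<bar> powr p)"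
  shows "integrable lmeas (\<lambda>x. f x * g x)"
    and "\<bar>\<integral>x. f x * g x \<partial>lmeas\<bar> \<le> (\<integral>x. \<bar>f x\<bar> powr q \<partial>lmeas) powr (1/q) * (\<integral>x. \<bar>g x\<bar> powr p \<partial>lmeas) powr (1/p)"
proof -
  have "p - 1 > 0" using p by simp
  then have q1: "q > 1" using q by (simp add: less_divide_eq)
  have pq: "1/q + 1/p = 1"
  proof -
    have "1/q = (p-1)/p" using q by simp
    then show ?thesis using p by (simp add: add_divide_distrib[symmetric])
  qed
  show int: "integrable lmeas (\<lambda>x. f x * g x)"
  proof (rule Bochner_Integration.integrable_bound[OF Bochner_Integration.integrable_add[OF integrable_divide[OF fi] integrable_divide[OF gi]]])
    show "(\<lambda>x. f x * g x) \<in> borel_measurable lmeas" using fm gm by measurable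
    show "AE x in lmeas. norm (f x * g x) \<le> norm (\<bar>f x\<bar> powr q / q + \<bar>g x\<bar> powr p / p)"
      using young_pt[OF p q, of "\<bar>f _\<bar>" "\<bar>g _\<bar>"] p q1 by (auto simp: abs_mult)
  qed
  define F where "F = (\<integral>x. \<bar>f x\<bar> powr q \<partial>lmeas)"
  define G where "G = (\<integral>x. \<bar>g x\<bar> powr p \<partial>lmeas)"
  have F0: "F \<ge> 0" unfolding F_def by (rule integral_nonneg_AE) auto
  have G0: "G \<ge> 0" unfolding G_def by (rule integral_nonneg_AE) auto
  have "\<bar>\<integral>x. f x * g x \<partial>lmeas\<bar> \<le> (F + d) powr (1/q) * (G + d) powr (1/p)" if d: "d > 0" for d
  proof -
    define A where "A = (F + d) powr (1/q)"
    define Bb where "Bb = (G + d) powr (1/p)"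
    have A0: "A > 0" and B0: "Bb > 0" using F0 G0 d by (auto simp: A_def Bb_def)
    have Aq: "A powr q = F + d" unfolding A_def using F0 d q1 by (simp add: powr_powr)
    have Bp: "Bb powr p = G + d" unfolding Bb_def using G0 d p by (simp add: powr_powr)
    have pt: "\<bar>f x * g x\<bar> \<le> A * Bb * (\<bar>f x\<bar> powr q / (q * (F + d)) + \<bar>g x\<bar> powr p / (p * (G + d)))" for x
    proof -
      have "(\<bar>f x\<bar> / A) * (\<bar>g x\<bar> / Bb) \<le> (\<bar>f x\<bar> / A) powr q / q + (\<bar>g x\<bar> / Bb) powr p / p"
        by (rule young_pt[OF p q]) (use A0 B0 in auto)
      also have "\<dots> = \<bar>f x\<bar> powr q / (q * (F + d)) + \<bar>g x\<bar> powr p / (p * (G + d))"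
        using A0 B0 by (simp add: powr_divide Aq Bp mult.commute)
      finally have "(\<bar>f x\<bar> / A) * (\<bar>g x\<bar> / Bb) \<le> \<bar>f x\<bar> powr q / (q * (F + d)) + \<bar>g x\<bar> powr p / (p * (G + d))" .
      then have "A * Bb * ((\<bar>f x\<bar> / A) * (\<bar>g x\<bar> / Bb)) \<le> A * Bb * (\<bar>f x\<bar> powr q / (q * (F + d)) + \<bar>g x\<bar> powr p / (p * (G + d)))"
        using A0 B0 by (intro mult_left_mono) auto
      moreover have "A * Bb * ((\<bar>f x\<bar> / A) * (\<bar>g x\<bar> / Bb)) = \<bar>f x * g x\<bar>" using A0 B0 by (simp add: abs_mult)
      ultimately show ?thesis by simp
    qed
    have "\<bar>\<integral>x. f x * g x \<partial>lmeas\<bar> \<le> (\<integral>x. \<bar>f x * g x\<bar> \<partial>lmeas)"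
      by (rule integral_abs_bound)
    also have "\<dots> \<le> (\<integral>x. A * Bb * (\<bar>f x\<bar> powr q / (q * (F + d)) + \<bar>g x\<bar> powr p / (p * (G + d))) \<partial>lmeas)"
      using pt fi gi int by (intro integral_mono) auto
    also have "\<dots> = A * Bb * (F / (q * (F + d)) + G / (p * (G + d)))"
      using fi gi by (simp add: F_def G_def)
    also have "\<dots> \<le> A * Bb * (1 / q + 1 / p)"
    proof -
      have e1: "F / (q * (F + d)) = (1/q) * (F / (F + d))" by simp
      have "(1/q) * (F / (F + d)) \<le> (1/q) * 1" using F0 d q1 by (intro mult_left_mono) auto
      then have "F / (q * (F + d)) \<le> 1 / q" unfolding e1 by simp
      have e2: "G / (p * (G + d)) = (1/p) * (G / (G + d))" by simp
      have "(1/p) * (G / (G + d)) \<le> (1/p) * 1" using G0 d p by (intro mult_left_mono) auto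
      then have "G / (p * (G + d)) \<le> 1 / p" unfolding e2 by simp
      with \<open>F / (q * (F + d)) \<le> 1 / q\<close> show ?thesis using A0 B0 by (intro mult_left_mono) auto
    qed
    also have "\<dots> = A * Bb" using pq by simp
    finally show ?thesis by (simp add: A_def Bb_def)
  qed
  then show "\<bar>\<integral>x. f x * g x \<partial>lmeas\<bar> \<le> F powr (1/q) * G powr (1/p)"
    by (rule powr_limit_le) (use F0 G0 q1 p in auto)
qed


lemma flip_in: "\<theta> \<in> B \<rightarrow>\<^sub>E {-1::real,1} \<Longrightarrow> K \<in> B \<Longrightarrow> \<theta>(K := - \<theta> K) \<in> B \<rightarrow>\<^sub>E {-1,1}"
  by (auto simp: PiE_iff extensional_def)

lemma flip_sum_zero:
  fixes f :: "(nat \<times> nat \<Rightarrow> real) \<Rightarrow> real"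
  assumes K: "K \<in> B" and f: "\<And>\<theta>. \<theta> \<in> B \<rightarrow>\<^sub>E {-1,1} \<Longrightarrow> f (\<theta>(K := - \<theta> K)) = - f \<theta>"
  shows "(\<Sum>\<theta>\<in>B \<rightarrow>\<^sub>E {-1,1}. f \<theta>) = 0"
proof -
  let ?fl = "\<lambda>\<theta>::nat\<times>nat\<Rightarrow>real. \<theta>(K := - \<theta> K)"
  have bij: "bij_betw ?fl (B \<rightarrow>\<^sub>E {-1,1}) (B \<rightarrow>\<^sub>E {-1,1})"
    by (rule bij_betw_byWitness[where f' = ?fl]) (simp_all add: flip_in K image_subset_iff)
  have "(\<Sum>\<theta>\<in>B \<rightarrow>\<^sub>E {-1,1}. f \<theta>) = (\<Sum>\<theta>\<in>B \<rightarrow>\<^sub>E {-1,1}. f (?fl \<theta>))"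
    by (rule sum.reindex_bij_betw[OF bij, symmetric])
  also have "\<dots> = (\<Sum>\<theta>\<in>B \<rightarrow>\<^sub>E {-1,1}. - f \<theta>)" by (rule sum.cong) (auto simp: f)
  finally show ?thesis by (simp add: sum_negf)
qed

lemma theta_sq: "\<theta> \<in> B \<rightarrow>\<^sub>E {-1::real,1} \<Longrightarrow> K \<in> B \<Longrightarrow> \<theta> K * \<theta> K = 1"
  by (auto simp: PiE_iff)

lemma two_zero:
  fixes B :: "(nat \<times> nat) set"
  assumes "K \<in> B" "L \<in> B" "K \<noteq> L"
  shows "(\<Sum>\<theta>\<in>B \<rightarrow>\<^sub>E {-1,1}. \<theta> K * \<theta> L * c) = (0::real)"
  by (rule flip_sum_zero[OF assms(1)]) (use assms in auto)

lemma four_zero: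
  fixes B :: "(nat \<times> nat) set"
  assumes "K \<in> B" "L \<in> B" "K \<noteq> L" "K' \<in> B" "L' \<in> B" "K' \<noteq> L'"
    and "\<not> ((K' = K \<and> L' = L) \<or> (K' = L \<and> L' = K))"
  shows "(\<Sum>\<theta>\<in>B \<rightarrow>\<^sub>E {-1,1}. \<theta> K * \<theta> L * (\<theta> K' * \<theta> L') * c) = (0::real)"
proof (cases "K \<noteq> K' \<and> K \<noteq> L'")
  case True
  show ?thesis by (rule flip_sum_zero[OF assms(1)]) (use assms True in auto)
next
  case False
  then have "L \<noteq> K' \<and> L \<noteq> L'" using assms by auto
  then show ?thesis by (intro flip_sum_zero[OF assms(2)]) (use assms in auto)
qed

lemma four_eval:
  fixes B :: "(nat \<times> nat) set"
  assumes "finite B" "u \<in> {(K,L). K \<in> B \<and> L \<in> B \<and> K \<noteq> L}" "v \<in> {(K,L). K \<in> B \<and> L \<in> B \<and> K \<noteq> L}"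
  shows "(\<Sum>\<theta>\<in>B \<rightarrow>\<^sub>E {-1,1}. \<theta> (fst u) * \<theta> (snd u) * (\<theta> (fst v) * \<theta> (snd v)) * c)
     = (if v = u \<or> v = prod.swap u then real (card (B \<rightarrow>\<^sub>E ({-1,1}::real set))) * c else 0)"
proof (cases "v = u \<or> v = prod.swap u")
  case True
  have "(\<Sum>\<theta>\<in>B \<rightarrow>\<^sub>E {-1,1}. \<theta> (fst u) * \<theta> (snd u) * (\<theta> (fst v) * \<theta> (snd v)) * c) = (\<Sum>\<theta>\<in>B \<rightarrow>\<^sub>E {-1::real,1}. c)"
  proof (rule sum.cong)
    fix \<theta> assume th: "\<theta> \<in> B \<rightarrow>\<^sub>E {-1::real,1}"
    have s1: "\<theta> (fst u) * \<theta> (fst u) = 1" "\<theta> (snd u) * \<theta> (snd u) = 1"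
      using theta_sq[OF th] assms(2) by auto
    have "\<theta> (fst u) * \<theta> (snd u) * (\<theta> (fst v) * \<theta> (snd v)) = (\<theta> (fst u) * \<theta> (fst u)) * (\<theta> (snd u) * \<theta> (snd u))"
      using True by (auto simp: mult_ac)
    then show "\<theta> (fst u) * \<theta> (snd u) * (\<theta> (fst v) * \<theta> (snd v)) * c = c" using s1 by simp
  qed simp
  then show ?thesis using True by simp
next
  case False
  define K L K' L' where "K = fst u" "L = snd u" "K' = fst v" "L' = snd v"
  then have u: "u = (K,L)" and v: "v = (K',L')" by simp_all
  show ?thesis using False assms four_zero[of K B L K' L' c] unfolding u v by auto
qed

lemma var_alg:
  fixes B :: "(nat \<times> nat) set" and a :: "nat \<times> nat \<Rightarrow> nat \<times> nat \<Rightarrow> real"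
  assumes fin: "finite B"
  defines "P \<equiv> {(K,L). K \<in> B \<and> L \<in> B \<and> K \<noteq> L}"
  defines "Zs \<equiv> (\<lambda>\<theta>. \<Sum>u\<in>P. \<theta> (fst u) * \<theta> (snd u) * a (fst u) (snd u))"
  shows "(\<Sum>\<theta>\<in>B \<rightarrow>\<^sub>E {-1,1}. Zs \<theta>) = 0"
    and "(\<Sum>\<theta>\<in>B \<rightarrow>\<^sub>E {-1,1}. (Zs \<theta>)\<^sup>2) \<le> real (card (B \<rightarrow>\<^sub>E ({-1,1}::real set))) * (2 * (\<Sum>K\<in>B. \<Sum>L\<in>B. (a K L)\<^sup>2))"
proof -
  have finP: "finite P" unfolding P_def
    by (rule finite_subset[of _ "B \<times> B"]) (use fin in auto)
  have finT: "finite (B \<rightarrow>\<^sub>E ({-1,1}::real set))" using fin by (simp add: finite_PiE)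
  show "(\<Sum>\<theta>\<in>B \<rightarrow>\<^sub>E {-1,1}. Zs \<theta>) = 0"
    unfolding Zs_def
  proof (subst sum.swap, rule sum.neutral, rule ballI)
    fix u assume "u \<in> P"
    then show "(\<Sum>\<theta>\<in>B \<rightarrow>\<^sub>E {-1,1}. \<theta> (fst u) * \<theta> (snd u) * a (fst u) (snd u)) = 0"
      by (intro two_zero) (auto simp: P_def)
  qed
  define c where "c = real (card (B \<rightarrow>\<^sub>E ({-1,1}::real set)))"
  define au where "au u = a (fst u) (snd u)" for u
  have "(\<Sum>\<theta>\<in>B \<rightarrow>\<^sub>E {-1,1}. (Zs \<theta>)\<^sup>2) = (\<Sum>\<theta>\<in>B \<rightarrow>\<^sub>E {-1,1}. \<Sum>u\<in>P. \<Sum>v\<in>P.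
        \<theta> (fst u) * \<theta> (snd u) * (\<theta> (fst v) * \<theta> (snd v)) * (au u * au v))"
    unfolding Zs_def power2_eq_square sum_product au_def by (intro sum.cong refl) (simp add: mult_ac)
  also have "\<dots> = (\<Sum>u\<in>P. \<Sum>v\<in>P. \<Sum>\<theta>\<in>B \<rightarrow>\<^sub>E {-1,1}.
        \<theta> (fst u) * \<theta> (snd u) * (\<theta> (fst v) * \<theta> (snd v)) * (au u * au v))"
    by (subst sum.swap) (rule sum.cong[OF refl], rule sum.swap)
  also have "\<dots> = (\<Sum>u\<in>P. \<Sum>v\<in>P. (if v = u \<or> v = prod.swap u then c * (au u * au v) else 0))"
    unfolding c_def by (intro sum.cong refl four_eval[OF fin]) (auto simp: P_def)
  also have "\<dots> = (\<Sum>u\<in>P. c * (au u * au u) + c * (au u * au (prod.swap u)))"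
  proof (rule sum.cong[OF refl])
    fix u assume u: "u \<in> P"
    then have uu: "fst u \<in> B" "snd u \<in> B" "fst u \<noteq> snd u" unfolding P_def by (simp_all add: case_prod_beta)
    have ne: "prod.swap u \<noteq> u"
    proof
      assume "prod.swap u = u"
      then have "fst (prod.swap u) = fst u" by simp
      then show False using uu(3) by simp
    qed
    have su: "prod.swap u \<in> P" unfolding P_def using uu by (simp add: case_prod_beta)
    have "(\<Sum>v\<in>P. (if v = u \<or> v = prod.swap u then c * (au u * au v) else 0))
       = (\<Sum>v\<in>P. (if v = u then c * (au u * au u) else 0) + (if v = prod.swap u then c * (au u * au (prod.swap u)) else 0))"
      using ne by (intro sum.cong refl) auto
    also have "\<dots> = c * (au u * au u) + c * (au u * au (prod.swap u))"
      using u su finP by (simp add: sum.distrib)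
    finally show "(\<Sum>v\<in>P. (if v = u \<or> v = prod.swap u then c * (au u * au v) else 0)) = c * (au u * au u) + c * (au u * au (prod.swap u))" .
  qed
  also have "\<dots> \<le> (\<Sum>u\<in>P. c * ((au u)\<^sup>2 + ((au u)\<^sup>2 + (au (prod.swap u))\<^sup>2) / 2))"
  proof (rule sum_mono)
    fix u
    have h: "2 * (au u * au (prod.swap u)) \<le> (au u)\<^sup>2 + (au (prod.swap u))\<^sup>2"
      using sum_squares_bound[of "au u" "au (prod.swap u)"] by (simp add: power2_eq_square)
    have c0: "c \<ge> 0" by (simp add: c_def)
    have m: "c * (2 * (au u * au (prod.swap u))) \<le> c * ((au u)\<^sup>2 + (au (prod.swap u))\<^sup>2)"
      by (rule mult_left_mono[OF h c0])
    show "c * (au u * au u) + c * (au u * au (prod.swap u)) \<le> c * ((au u)\<^sup>2 + ((au u)\<^sup>2 + (au (prod.swap u))\<^sup>2) / 2)"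
      using m by (simp add: power2_eq_square algebra_simps)
  qed
  also have "\<dots> = (\<Sum>u\<in>P. (3/2) * (c * (au u)\<^sup>2) + (1/2) * (c * (au (prod.swap u))\<^sup>2))"
    by (intro sum.cong refl) (simp add: field_simps)
  also have "\<dots> = (3/2) * (\<Sum>u\<in>P. c * (au u)\<^sup>2) + (1/2) * (\<Sum>u\<in>P. c * (au (prod.swap u))\<^sup>2)"
    by (simp add: sum.distrib sum_distrib_left)
  also have "(\<Sum>u\<in>P. c * (au (prod.swap u))\<^sup>2) = (\<Sum>u\<in>P. c * (au u)\<^sup>2)"
    by (rule sum.reindex_bij_witness[where i = prod.swap and j = prod.swap]) (auto simp: P_def)
  also have "(3/2) * (\<Sum>u\<in>P. c * (au u)\<^sup>2) + (1/2) * (\<Sum>u\<in>P. c * (au u)\<^sup>2) = c * (2 * (\<Sum>u\<in>P. (au u)\<^sup>2))"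
    by (simp add: sum_distrib_left[symmetric])
  also have "(\<Sum>u\<in>P. (au u)\<^sup>2) \<le> (\<Sum>u\<in>B \<times> B. (au u)\<^sup>2)"
    by (rule sum_mono2) (use fin in \<open>auto simp: P_def\<close>)
  also have "(\<Sum>u\<in>B \<times> B. (au u)\<^sup>2) = (\<Sum>K\<in>B. \<Sum>L\<in>B. (a K L)\<^sup>2)"
    by (simp add: sum.cartesian_product au_def case_prod_beta)
  finally show "(\<Sum>\<theta>\<in>B \<rightarrow>\<^sub>E {-1,1}. (Zs \<theta>)\<^sup>2) \<le> real (card (B \<rightarrow>\<^sub>E ({-1,1}::real set))) * (2 * (\<Sum>K\<in>B. \<Sum>L\<in>B. (a K L)\<^sup>2))"
    by (simp add: c_def mult_right_mono)
qed


lemma Lp_norm_nonneg: "Lp_norm p f \<ge> 0"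
  unfolding Lp_norm_def by simp

lemma Lp_norm_scale:
  assumes "p > 0"
  shows "Lp_norm p (\<lambda>x. t * f x) = \<bar>t\<bar> * Lp_norm p f"
proof -
  have "(\<integral>x. \<bar>t * f x\<bar> powr p \<partial>lmeas) = \<bar>t\<bar> powr p * (\<integral>x. \<bar>f x\<bar> powr p \<partial>lmeas)"
    by (simp add: abs_mult powr_mult)
  moreover have "(\<integral>x. \<bar>f x\<bar> powr p \<partial>lmeas) \<ge> 0" by (rule integral_nonneg_AE) auto
  ultimately show ?thesis unfolding Lp_norm_def using assms
    by (simp add: powr_mult powr_powr)
qed

lemma Lp_norm_zero: "p > 0 \<Longrightarrow> Lp_norm p (\<lambda>x. 0) = 0"
  unfolding Lp_norm_def by simp

lemma dyadic_level_finite: "finite (dyadic_level N)"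
proof -
  have "dyadic_level N \<subseteq> (\<lambda>i. (N, i)) ` {1..2^N}" by (auto simp: dyadic_level_def)
  then show ?thesis by (rule finite_subset) simp
qed

locale setting =
  fixes p :: real and hh :: "nat \<Rightarrow> nat \<times> nat \<Rightarrow> real \<Rightarrow> real"
    and T :: "(real \<Rightarrow> real) \<Rightarrow> (real \<Rightarrow> real)"
    and M N :: nat and B :: "(nat \<times> nat) set"
  assumes p: "1 < p"
    and hc: "haar_copies hh"
    and bl: "bounded_linear_on p (Rp0 p hh) T"
    and N1: "1 \<le> N" and NM: "N < M"
    and BN: "B \<subseteq> dyadic_level N"
begin

abbreviation "D \<equiv> dyadic_upto (M - 1)"
abbreviation "X \<equiv> Rp0 p hh"
abbreviation "C \<equiv> op_norm p X T"
definition "comb S c = (\<lambda>x. \<Sum>K\<in>S. c K * hh M K x)"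

lemma levD: "K \<in> dyadic_level N \<Longrightarrow> K \<in> D"
  unfolding dyadic_upto_def using NM by auto

lemma BD: "B \<subseteq> D" using BN levD by auto

lemma finB: "finite B" using BN dyadic_level_finite finite_subset by blast

lemma hmeas: "K \<in> D \<Longrightarrow> hh M K \<in> borel_measurable lmeas"
  using hc NM unfolding haar_copies_def by auto

lemma distr_eq: "distr lmeas (PiM D (\<lambda>_. borel)) (\<lambda>x. \<lambda>I\<in>D. hh M I x)
               = distr lmeas (PiM D (\<lambda>_. borel)) (\<lambda>x. \<lambda>I\<in>D. haar I x)"
  using hc NM unfolding haar_copies_def by auto

lemma transfer:
  fixes F :: "(nat \<times> nat \<Rightarrow> real) \<Rightarrow> real"
  assumes F: "F \<in> borel_measurable (PiM D (\<lambda>_. borel))"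
  shows "integrable lmeas (\<lambda>x. F (\<lambda>I\<in>D. hh M I x)) \<longleftrightarrow> integrable lmeas (\<lambda>x. F (\<lambda>I\<in>D. haar I x))"
    and "(\<integral>x. F (\<lambda>I\<in>D. hh M I x) \<partial>lmeas) = (\<integral>x. F (\<lambda>I\<in>D. haar I x) \<partial>lmeas)"
proof -
  have m1: "(\<lambda>x. \<lambda>I\<in>D. hh M I x) \<in> measurable lmeas (PiM D (\<lambda>_. borel))"
    by (rule measurable_restrict) (rule hmeas)
  have m2: "(\<lambda>x. \<lambda>I\<in>D. haar I x) \<in> measurable lmeas (PiM D (\<lambda>_. borel))"
    by (rule measurable_restrict) (rule haar_meas)
  show "integrable lmeas (\<lambda>x. F (\<lambda>I\<in>D. hh M I x)) \<longleftrightarrow> integrable lmeas (\<lambda>x. F (\<lambda>I\<in>D. haar I x))"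
    using integrable_distr_eq[OF m1 F] integrable_distr_eq[OF m2 F] distr_eq by simp
  show "(\<integral>x. F (\<lambda>I\<in>D. hh M I x) \<partial>lmeas) = (\<integral>x. F (\<lambda>I\<in>D. haar I x) \<partial>lmeas)"
    using integral_distr[OF m1 F] integral_distr[OF m2 F] distr_eq by simp
qed

lemma lin_meas:
  fixes c :: "nat \<times> nat \<Rightarrow> real"
  assumes "S \<subseteq> D"
  shows "(\<lambda>v. \<Sum>K\<in>S. c K * v K) \<in> borel_measurable (PiM D (\<lambda>_. borel))"
proof (rule borel_measurable_sum[where f = "\<lambda>K v. c K * v K"])
  fix K assume "K \<in> S"
  then have "K \<in> D" using assms by auto
  then show "(\<lambda>v. c K * v K) \<in> borel_measurable (PiM D (\<lambda>_. borel))"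
    by measurable
qed

lemma vec_hh_meas: "(\<lambda>x. \<lambda>I\<in>D. hh M I x) \<in> measurable lmeas (PiM D (\<lambda>_. borel))"
  by (rule measurable_restrict) (rule hmeas)

lemma vec_haar_meas: "(\<lambda>x. \<lambda>I\<in>D. haar I x) \<in> measurable lmeas (PiM D (\<lambda>_. borel))"
  by (rule measurable_restrict) (rule haar_meas)

lemma powlin_meas:
  fixes c :: "nat \<times> nat \<Rightarrow> real"
  assumes "S \<subseteq> D"
  shows "(\<lambda>v. \<bar>\<Sum>K\<in>S. c K * v K\<bar> powr r) \<in> borel_measurable (PiM D (\<lambda>_. borel))"
proof -
  note lin_meas[OF assms, of c, measurable]
  show ?thesis by measurable
qed

lemma comb_meas: "S \<subseteq> B \<Longrightarrow> comb S c \<in> borel_measurable lmeas"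
  unfolding comb_def
  by (rule borel_measurable_sum[where f = "\<lambda>K x. c K * hh M K x"], rule borel_measurable_times)
     (use BD hmeas in auto)

lemma restr_sum:
  fixes c :: "nat \<times> nat \<Rightarrow> real"
  assumes "S \<subseteq> D"
  shows "(\<Sum>K\<in>S. c K * (\<lambda>I\<in>D. f I) K) = (\<Sum>K\<in>S. c K * f K)"
  using assms by (intro sum.cong) auto

lemma sumpow:
  assumes S: "S \<subseteq> B" and eps: "\<And>K. K \<in> S \<Longrightarrow> \<bar>\<epsilon> K\<bar> = 1" and r: "r > 0"
  shows "integrable lmeas (\<lambda>x. \<bar>comb S \<epsilon> x\<bar> powr r)"
    and "(\<integral>x. \<bar>comb S \<epsilon> x\<bar> powr r \<partial>lmeas) = real (card S) / 2^N"
proof -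
  have SD: "S \<subseteq> D" using S BD by auto
  have SN: "S \<subseteq> dyadic_level N" "finite S" using S BN finB finite_subset by auto
  define F where "F = (\<lambda>v. \<bar>\<Sum>K\<in>S. \<epsilon> K * v K\<bar> powr r)"
  have Fm: "F \<in> borel_measurable (PiM D (\<lambda>_. borel))" unfolding F_def by (rule powlin_meas[OF SD])
  have e1: "(\<lambda>x. F (\<lambda>I\<in>D. hh M I x)) = (\<lambda>x. \<bar>comb S \<epsilon> x\<bar> powr r)"
    unfolding F_def comb_def restr_sum[OF SD] ..
  have e2: "(\<lambda>x. F (\<lambda>I\<in>D. haar I x)) = (\<lambda>x. \<Sum>K\<in>S. indicator (dyint K) x)"
    unfolding F_def restr_sum[OF SD] using haar_sum[OF SN eps r] by simp
  show "integrable lmeas (\<lambda>x. \<bar>comb S \<epsilon> x\<bar> powr r)"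
    using transfer(1)[OF Fm] integral_indic_sum(1)[OF SN] unfolding e1 e2 by simp
  show "(\<integral>x. \<bar>comb S \<epsilon> x\<bar> powr r \<partial>lmeas) = real (card S) / 2^N"
    using transfer(2)[OF Fm] integral_indic_sum(2)[OF SN] unfolding e1 e2 by simp
qed

lemma comb_int:
  assumes S: "S \<subseteq> B"
  shows "integrable lmeas (\<lambda>x. \<bar>comb S c x\<bar> powr p)"
proof -
  interpret finite_measure lmeas by (rule fin_lmeas)
  have SD: "S \<subseteq> D" using S BD by auto
  define F where "F = (\<lambda>v. \<bar>\<Sum>K\<in>S. c K * v K\<bar> powr p)"
  have Fm: "F \<in> borel_measurable (PiM D (\<lambda>_. borel))" unfolding F_def by (rule powlin_meas[OF SD])
  have e1: "(\<lambda>x. F (\<lambda>I\<in>D. hh M I x)) = (\<lambda>x. \<bar>comb S c x\<bar> powr p)"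
    unfolding F_def comb_def restr_sum[OF SD] ..
  have "integrable lmeas (\<lambda>x. F (\<lambda>I\<in>D. haar I x))"
  proof (rule integrable_const_bound[where B = "(\<Sum>K\<in>S. \<bar>c K\<bar>) powr p"])
    show "AE x in lmeas. norm (F (\<lambda>I\<in>D. haar I x)) \<le> (\<Sum>K\<in>S. \<bar>c K\<bar>) powr p"
      unfolding F_def restr_sum[OF SD] using p
      by (intro AE_I2) (simp add: powr_mono2 haar_bound)
    show "(\<lambda>x. F (\<lambda>I\<in>D. haar I x)) \<in> borel_measurable lmeas"
      using measurable_comp[OF vec_haar_meas Fm] by (simp add: comp_def)
  qed
  then show ?thesis using transfer(1)[OF Fm] unfolding e1 by simp
qed

lemma comb_in_X:
  assumes S: "S \<subseteq> B"
  shows "comb S c \<in> X"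
proof -
  have "in_Lp p (comb S c)" unfolding in_Lp_def using comb_meas[OF S] comb_int[OF S] by simp
  moreover have "comb S c \<in> lin_span_hh hh"
  proof -
    have finS: "finite S" using S finB finite_subset by auto
    have inj: "inj_on (\<lambda>K. (M, K)) S" by (auto simp: inj_on_def)
    have sub: "(\<lambda>K. (M, K)) ` S \<subseteq> D_omega"
    proof
      fix j assume "j \<in> (\<lambda>K. (M, K)) ` S"
      then obtain K where "j = (M, K)" "K \<in> S" by blast
      moreover have "K \<in> D" using \<open>K \<in> S\<close> S BD by auto
      ultimately show "j \<in> D_omega" unfolding D_omega_def mem_Collect_eq
        by (intro exI[where x = M] exI[where x = K]) (use NM in simp)
    qed
    have "comb S c = (\<lambda>x. \<Sum>j\<in>(\<lambda>K. (M, K)) ` S. c (snd j) * hh (fst j) (snd j) x)"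
      unfolding comb_def by (rule ext) (simp add: sum.reindex[OF inj] comp_def)
    then show ?thesis unfolding lin_span_hh_def mem_Collect_eq
      by (intro exI[where x = "(\<lambda>K. (M, K)) ` S"] exI[where x = "\<lambda>j. c (snd j)"] conjI)
         (use finS sub in simp_all)
  qed
  moreover have "Lp_norm p (\<lambda>x. comb S c x - comb S c x) = 0" using p Lp_norm_zero[of p] by simp
  ultimately show ?thesis unfolding Rp0_def mem_Collect_eq
    by (intro conjI allI impI bexI[where x = "comb S c"]) simp_all
qed

lemma zero_in_X: "(\<lambda>x. 0) \<in> X"
  using comb_in_X[of "{}" "\<lambda>_. 0"] by (simp add: comb_def)

lemma h_in_X: "K \<in> B \<Longrightarrow> hh M K \<in> X"
  using comb_in_X[of "{K}" "\<lambda>_. 1"] by (simp add: comb_def)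

lemma T_lin: "f \<in> X \<Longrightarrow> g \<in> X \<Longrightarrow> T (\<lambda>x. a * f x + b * g x) = (\<lambda>x. a * T f x + b * T g x)"
  using bl unfolding bounded_linear_on_def by blast

lemma T_X: "f \<in> X \<Longrightarrow> T f \<in> X"
  using bl unfolding bounded_linear_on_def by blast

lemma T_zero: "T (\<lambda>x. 0) = (\<lambda>x. 0)"
  using T_lin[OF zero_in_X zero_in_X, of 0 0] by simp

lemma T_comb:
  assumes S: "S \<subseteq> B"
  shows "T (comb S c) = (\<lambda>x. \<Sum>K\<in>S. c K * T (hh M K) x)"
proof -
  have "finite S" using S finB finite_subset by auto
  then show ?thesis using S
  proof (induction S rule: finite_induct)
    case empty
    then show ?case using T_zero by (simp add: comb_def)
  next
    case (insert k S)
    have k: "k \<in> B" and SB: "S \<subseteq> B" using insert by auto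
    have "comb (insert k S) c = (\<lambda>x. c k * hh M k x + 1 * comb S c x)"
      unfolding comb_def using insert by simp
    then have "T (comb (insert k S) c) = (\<lambda>x. c k * T (hh M k) x + 1 * T (comb S c) x)"
      using T_lin[OF h_in_X[OF k] comb_in_X[OF SB], of "c k" 1] by simp
    then show ?case using insert SB by simp
  qed
qed

lemma T_bound: "\<exists>C0. \<forall>f\<in>X. Lp_norm p (T f) \<le> C0 * Lp_norm p f"
  using bl unfolding bounded_linear_on_def by blast

lemma Lp_X: "f \<in> X \<Longrightarrow> in_Lp p f"
  unfolding Rp0_def by auto

lemma opnorm_props:
  shows "C \<ge> 0"
    and "\<And>f. f \<in> X \<Longrightarrow> (\<And>t. (\<lambda>x. t * f x) \<in> X) \<Longrightarrow> Lp_norm p (T f) \<le> C * Lp_norm p f"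
proof -
  obtain C0 where C0: "\<forall>f\<in>X. Lp_norm p (T f) \<le> C0 * Lp_norm p f" using T_bound by blast
  define SS where "SS = {Lp_norm p (T f) | f. f \<in> X \<and> Lp_norm p f \<le> 1}"
  have Cd: "C = Sup SS" unfolding SS_def op_norm_def ..
  have bdd: "bdd_above SS"
  proof (rule bdd_aboveI[where M = "max C0 0"])
    fix y assume "y \<in> SS"
    then obtain f where f: "f \<in> X" "Lp_norm p f \<le> 1" "y = Lp_norm p (T f)" unfolding SS_def by blast
    have "y \<le> C0 * Lp_norm p f" using C0 f by auto
    also have "\<dots> \<le> max C0 0 * Lp_norm p f" using Lp_norm_nonneg[of p f] by (intro mult_right_mono) auto
    also have "\<dots> \<le> max C0 0 * 1" using f by (intro mult_left_mono) auto
    finally show "y \<le> max C0 0" by simp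
  qed
  have up: "Lp_norm p (T f) \<le> C" if "f \<in> X" "Lp_norm p f \<le> 1" for f
    unfolding Cd by (rule cSup_upper[OF _ bdd]) (use that SS_def in auto)
  show "C \<ge> 0"
    using up[OF zero_in_X] Lp_norm_zero[of p] p Lp_norm_nonneg[of p "T (\<lambda>x. 0)"] by simp
  fix f assume f: "f \<in> X" and sc: "\<And>t. (\<lambda>x. t * f x) \<in> X"
  show "Lp_norm p (T f) \<le> C * Lp_norm p f"
  proof (cases "Lp_norm p f = 0")
    case True
    have "Lp_norm p (T f) \<le> C0 * Lp_norm p f" using C0 f by blast
    then have "Lp_norm p (T f) \<le> 0" using True by simp
    then show ?thesis using True by simp
  next
    case False
    define n where "n = Lp_norm p f"
    have n0: "n > 0" using False Lp_norm_nonneg[of p f] unfolding n_def by simp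
    have L1: "Lp_norm p (\<lambda>x. (1/n) * f x) = 1" using Lp_norm_scale[of p "1/n" f] p n0 by (simp add: n_def)
    have "Lp_norm p (T (\<lambda>x. (1/n) * f x)) \<le> C" by (rule up[OF sc]) (use L1 in linarith)
    moreover have "T (\<lambda>x. (1/n) * f x) = (\<lambda>x. (1/n) * T f x)"
      using T_lin[OF f f, of "1/n" 0] by simp
    ultimately have "(1/n) * Lp_norm p (T f) \<le> C" using Lp_norm_scale[of p "1/n" "T f"] p n0 by simp
    then show ?thesis using n0 by (simp add: n_def field_simps)
  qed
qed

end


lemma offdiag:
  fixes B :: "(nat \<times> nat) set" and a :: "nat \<times> nat \<Rightarrow> nat \<times> nat \<Rightarrow> real"
  assumes fin: "finite B" and th: "\<theta> \<in> B \<rightarrow>\<^sub>E {-1,1}"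
  shows "(\<Sum>K\<in>B. \<Sum>L\<in>B. \<theta> K * \<theta> L * a K L) - (\<Sum>K\<in>B. a K K)
       = (\<Sum>u\<in>{(K,L). K \<in> B \<and> L \<in> B \<and> K \<noteq> L}. \<theta> (fst u) * \<theta> (snd u) * a (fst u) (snd u))"
proof -
  have "(\<Sum>K\<in>B. \<Sum>L\<in>B. \<theta> K * \<theta> L * a K L) = (\<Sum>K\<in>B. a K K + (\<Sum>L\<in>B - {K}. \<theta> K * \<theta> L * a K L))"
  proof (rule sum.cong[OF refl])
    fix K assume K: "K \<in> B"
    have "(\<Sum>L\<in>B. \<theta> K * \<theta> L * a K L) = \<theta> K * \<theta> K * a K K + (\<Sum>L\<in>B - {K}. \<theta> K * \<theta> L * a K L)"
      using K fin by (simp add: sum.remove)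
    then show "(\<Sum>L\<in>B. \<theta> K * \<theta> L * a K L) = a K K + (\<Sum>L\<in>B - {K}. \<theta> K * \<theta> L * a K L)"
      using theta_sq[OF th K] by simp
  qed
  also have "\<dots> = (\<Sum>K\<in>B. a K K) + (\<Sum>K\<in>B. \<Sum>L\<in>B - {K}. \<theta> K * \<theta> L * a K L)"
    by (simp add: sum.distrib)
  also have "(\<Sum>K\<in>B. \<Sum>L\<in>B - {K}. \<theta> K * \<theta> L * a K L) = (\<Sum>(K,L)\<in>Sigma B (\<lambda>K. B - {K}). \<theta> K * \<theta> L * a K L)"
    by (rule sum.Sigma[OF fin]) (use fin in simp)
  also have "Sigma B (\<lambda>K. B - {K}) = {(K,L). K \<in> B \<and> L \<in> B \<and> K \<noteq> L}" by auto
  finally show ?thesis by (simp add: case_prod_beta)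
qed

context setting
begin

definition "qq = p / (p - 1)"

lemma qq_pos: "qq > 0" using p by (simp add: qq_def)

lemma pq1: "1 / qq + 1 / p = 1"
proof -
  have "1/qq = (p-1)/p" using p by (simp add: qq_def)
  then show ?thesis using p by (simp add: add_divide_distrib[symmetric])
qed

lemma h_comb: "comb {K} (\<lambda>_. 1) = hh M K" by (simp add: comb_def)

lemma comb_scale: "(\<lambda>x. t * comb S c x) = comb S (\<lambda>K. t * c K)"
  by (simp add: comb_def sum_distrib_left mult.assoc)

lemma opn_comb: "S \<subseteq> B \<Longrightarrow> Lp_norm p (T (comb S c)) \<le> C * Lp_norm p (comb S c)"
  by (rule opnorm_props(2)[OF comb_in_X]) (auto simp: comb_scale intro: comb_in_X)

lemma Lp_comb_eps:
  assumes "S \<subseteq> B" "\<And>K. K \<in> S \<Longrightarrow> \<bar>\<epsilon> K\<bar> = 1"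
  shows "Lp_norm p (comb S \<epsilon>) = (real (card S) / 2^N) powr (1/p)"
  unfolding Lp_norm_def using sumpow(2)[OF assms, where r = p] p by simp

lemma pair_bound:
  assumes K: "K \<in> B" and g: "g \<in> X"
  shows "integrable lmeas (\<lambda>x. hh M K x * T g x)"
    and "\<bar>pairing (hh M K) (T g)\<bar> \<le> (1 / 2^N) powr (1/qq) * Lp_norm p (T g)"
proof -
  have KD: "K \<in> D" using K BD by auto
  have KB: "{K} \<subseteq> B" using K by simp
  have i1: "integrable lmeas (\<lambda>x. \<bar>hh M K x\<bar> powr qq)"
    using sumpow(1)[OF KB, where \<epsilon> = "\<lambda>_. 1" and r = qq] qq_pos by (simp add: h_comb)
  have v1: "(\<integral>x. \<bar>hh M K x\<bar> powr qq \<partial>lmeas) = 1 / 2^N"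
    using sumpow(2)[OF KB, where \<epsilon> = "\<lambda>_. 1" and r = qq] qq_pos by (simp add: h_comb)
  have Tg: "in_Lp p (T g)" by (rule Lp_X[OF T_X[OF g]])
  note H = holder[OF p qq_def hmeas[OF KD], of "T g"]
  show "integrable lmeas (\<lambda>x. hh M K x * T g x)"
    using H(1) Tg i1 unfolding in_Lp_def by simp
  show "\<bar>pairing (hh M K) (T g)\<bar> \<le> (1 / 2^N) powr (1/qq) * Lp_norm p (T g)"
    using H(2) Tg i1 v1 unfolding in_Lp_def pairing_def Lp_norm_def by simp
qed

definition "aa K L = pairing (hh M K) (T (hh M L))"

lemma pair_expand:
  assumes K: "K \<in> B"
  shows "pairing (hh M K) (T (comb B c)) = (\<Sum>L\<in>B. c L * aa K L)"
proof -
  have "pairing (hh M K) (T (comb B c)) = (\<integral>x. (\<Sum>L\<in>B. c L * (hh M K x * T (hh M L) x)) \<partial>lmeas)"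
    unfolding pairing_def T_comb[OF order_refl]
    by (simp add: sum_distrib_left mult_ac)
  also have "\<dots> = (\<Sum>L\<in>B. c L * (\<integral>x. hh M K x * T (hh M L) x \<partial>lmeas))"
  proof (subst Bochner_Integration.integral_sum)
    fix L assume "L \<in> B"
    then show "integrable lmeas (\<lambda>x. c L * (hh M K x * T (hh M L) x))"
      using pair_bound(1)[OF K h_in_X] by simp
  qed simp
  finally show ?thesis by (simp add: aa_def pairing_def)
qed

lemma quad_expand:
  shows "pairing (comb B c) (T (comb B c)) = (\<Sum>K\<in>B. \<Sum>L\<in>B. c K * c L * aa K L)"
proof -
  have "pairing (comb B c) (T (comb B c)) = (\<integral>x. (\<Sum>K\<in>B. c K * (hh M K x * T (comb B c) x)) \<partial>lmeas)"
    unfolding pairing_def comb_def[of B c]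
    by (simp add: sum_distrib_right mult_ac)
  also have "\<dots> = (\<Sum>K\<in>B. c K * (\<integral>x. hh M K x * T (comb B c) x \<partial>lmeas))"
  proof (subst Bochner_Integration.integral_sum)
    fix K assume "K \<in> B"
    then show "integrable lmeas (\<lambda>x. c K * (hh M K x * T (comb B c) x))"
      using pair_bound(1)[OF _ comb_in_X[OF order_refl]] by simp
  qed simp
  also have "\<dots> = (\<Sum>K\<in>B. c K * (\<Sum>L\<in>B. c L * aa K L))"
    using pair_expand by (simp add: pairing_def)
  finally show ?thesis by (simp add: sum_distrib_left mult_ac)
qed

lemma a_bound:
  assumes K: "K \<in> B" and L: "L \<in> B"
  shows "\<bar>aa K L\<bar> \<le> (1/2^N) powr (1/qq) * (C * (1/2^N) powr (1/p))"
proof -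
  have LB: "{L} \<subseteq> B" using L by simp
  have "\<bar>aa K L\<bar> \<le> (1/2^N) powr (1/qq) * Lp_norm p (T (hh M L))"
    unfolding aa_def by (rule pair_bound(2)[OF K h_in_X[OF L]])
  also have "Lp_norm p (T (hh M L)) \<le> C * Lp_norm p (hh M L)"
    using opn_comb[OF LB, of "\<lambda>_. 1"] by (simp add: h_comb)
  also have "Lp_norm p (hh M L) = (1/2^N) powr (1/p)"
    using Lp_comb_eps[OF LB, of "\<lambda>_. 1"] by (simp add: h_comb)
  finally show ?thesis by (simp add: mult_left_mono)
qed

lemma row_bound:
  assumes K: "K \<in> B"
  shows "(\<Sum>L\<in>B. \<bar>aa K L\<bar>) \<le> (1/2^N) powr (1/qq) * (C * (real (card B) / 2^N) powr (1/p))"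
proof -
  define \<epsilon> where "\<epsilon> L = (if aa K L \<ge> 0 then 1 else (-1::real))" for L
  have e1: "\<And>L. \<bar>\<epsilon> L\<bar> = 1" by (simp add: \<epsilon>_def)
  have "(\<Sum>L\<in>B. \<bar>aa K L\<bar>) = (\<Sum>L\<in>B. \<epsilon> L * aa K L)"
    by (intro sum.cong refl) (simp add: \<epsilon>_def)
  also have "\<dots> = pairing (hh M K) (T (comb B \<epsilon>))" using pair_expand[OF K] by simp
  also have "\<dots> \<le> \<bar>pairing (hh M K) (T (comb B \<epsilon>))\<bar>" by simp
  also have "\<dots> \<le> (1/2^N) powr (1/qq) * Lp_norm p (T (comb B \<epsilon>))"
    by (rule pair_bound(2)[OF K comb_in_X[OF order_refl]])
  also have "Lp_norm p (T (comb B \<epsilon>)) \<le> C * Lp_norm p (comb B \<epsilon>)"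
    by (rule opn_comb[OF order_refl])
  also have "Lp_norm p (comb B \<epsilon>) = (real (card B) / 2^N) powr (1/p)"
    using Lp_comb_eps[OF order_refl e1] by simp
  finally show ?thesis by (simp add: mult_left_mono)
qed

lemma total_bound:
  "(\<Sum>K\<in>B. \<Sum>L\<in>B. (aa K L)\<^sup>2) \<le> C\<^sup>2 * (real (card B) / 2^N) powr (1/p + 1) * 2 powr (- real N / qq)"
proof -
  define X1 where "X1 = (1/2^N :: real) powr (1/qq)"
  define U where "U = real (card B) / 2^N"
  define m where "m = X1 * (C * (1/2^N) powr (1/p))"
  define R where "R = X1 * (C * U powr (1/p))"
  have m0: "m \<ge> 0" unfolding m_def X1_def using opnorm_props(1) by simp
  have "(\<Sum>K\<in>B. \<Sum>L\<in>B. (aa K L)\<^sup>2) \<le> (\<Sum>K\<in>B. m * R)"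
  proof (rule sum_mono)
    fix K assume K: "K \<in> B"
    have "(\<Sum>L\<in>B. (aa K L)\<^sup>2) \<le> (\<Sum>L\<in>B. m * \<bar>aa K L\<bar>)"
    proof (rule sum_mono)
      fix L assume L: "L \<in> B"
      have "\<bar>aa K L\<bar> * \<bar>aa K L\<bar> \<le> m * \<bar>aa K L\<bar>"
        using a_bound[OF K L] by (intro mult_right_mono) (auto simp: m_def X1_def)
      then show "(aa K L)\<^sup>2 \<le> m * \<bar>aa K L\<bar>" by (simp add: power2_eq_square)
    qed
    also have "\<dots> = m * (\<Sum>L\<in>B. \<bar>aa K L\<bar>)" by (simp add: sum_distrib_left)
    also have "\<dots> \<le> m * R" using row_bound[OF K] m0 by (intro mult_left_mono) (auto simp: R_def X1_def U_def)
    finally show "(\<Sum>L\<in>B. (aa K L)\<^sup>2) \<le> m * R" .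
  qed
  also have "\<dots> = real (card B) * m * R" by simp
  also have "\<dots> = C\<^sup>2 * U powr (1/p + 1) * 2 powr (- real N / qq)"
  proof -
    have h2: "(1/2^N :: real) = 2 powr (- real N)" by (simp add: powr_minus_divide powr_realpow)
    have "X1 * (1/2^N) powr (1/p) = (1/2^N) powr (1/qq + 1/p)" unfolding X1_def by (simp add: powr_add)
    also have "\<dots> = 1/2^N" using pq1 by simp
    finally have xp: "X1 * (1/2^N) powr (1/p) = 1/2^N" .
    have X1e: "X1 = 2 powr (- real N / qq)" unfolding X1_def h2 by (simp add: powr_powr)
    have U0: "U \<ge> 0" by (simp add: U_def)
    have Up: "U powr (1/p + 1) = U powr (1/p) * U" using U0 by (simp add: powr_add)
    have "real (card B) * m * R = (real (card B) * (X1 * (1/2^N) powr (1/p))) * C * C * X1 * U powr (1/p)"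
      by (simp add: m_def R_def mult_ac)
    also have "\<dots> = U * C * C * X1 * U powr (1/p)" by (simp add: xp U_def)
    finally show ?thesis by (simp add: Up X1e power2_eq_square mult_ac)
  qed
  finally show ?thesis by (simp add: U_def)
qed

end


theorem mainTheorem7:
  fixes p :: real and hh :: "nat \<Rightarrow> nat \<times> nat \<Rightarrow> real \<Rightarrow> real"
    and T :: "(real \<Rightarrow> real) \<Rightarrow> (real \<Rightarrow> real)"
    and M N :: nat and B :: "(nat \<times> nat) set"
  assumes "1 < p"
    and "haar_copies hh"
    and "bounded_linear_on p (Rp0 p hh) T"
    and "1 \<le> N" and "N < M"
    and "B \<subseteq> dyadic_level N"
  defines "q \<equiv> p / (p - 1)"
    and "Z \<equiv> (\<lambda>\<theta>. pairing (\<lambda>x. \<Sum>K\<in>B. \<theta> K * hh M K x)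
                       (T (\<lambda>x. \<Sum>K\<in>B. \<theta> K * hh M K x)) - (\<Sum>K\<in>B. pairing (hh M K) (T (hh M K))))"
  shows "sign_avg B Z = 0 \<and>
         sign_var B Z \<le> 2 * (op_norm p (Rp0 p hh) T)\<^sup>2
            * measure lborel (\<Union>K\<in>B. dyint K) powr (1 / p + 1) * 2 powr (- real N / q)"
proof -
  interpret setting p hh T M N B
    using assms(1-6) by unfold_locales
  have qq: "q = qq" by (simp add: q_def qq_def)
  have fin: "finite B" by (rule finB)
  define P where "P = {(K,L). K \<in> B \<and> L \<in> B \<and> K \<noteq> L}"
  define Zs where "Zs = (\<lambda>\<theta>. \<Sum>u\<in>P. \<theta> (fst u) * \<theta> (snd u) * aa (fst u) (snd u))"
  have Zeq: "Z \<theta> = Zs \<theta>" if th: "\<theta> \<in> B \<rightarrow>\<^sub>E {-1,1}" for \<theta>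
  proof -
    have "Z \<theta> = pairing (comb B \<theta>) (T (comb B \<theta>)) - (\<Sum>K\<in>B. aa K K)"
      unfolding Z_def comb_def aa_def ..
    also have "\<dots> = (\<Sum>K\<in>B. \<Sum>L\<in>B. \<theta> K * \<theta> L * aa K L) - (\<Sum>K\<in>B. aa K K)"
      by (simp add: quad_expand)
    also have "\<dots> = Zs \<theta>" unfolding Zs_def P_def by (rule offdiag[OF fin th])
    finally show ?thesis .
  qed
  note VA = var_alg[OF fin, of aa, folded P_def, folded Zs_def]
  have cpos: "real (card (B \<rightarrow>\<^sub>E ({-1,1}::real set))) > 0"
    using fin by (simp add: card_PiE)
  have avg: "sign_avg B Z = 0"
  proof -
    have "(\<Sum>\<theta>\<in>B \<rightarrow>\<^sub>E {-1,1}. Z \<theta>) = (\<Sum>\<theta>\<in>B \<rightarrow>\<^sub>E {-1,1}. Zs \<theta>)"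
      by (rule sum.cong[OF refl]) (rule Zeq)
    then show ?thesis unfolding sign_avg_def using VA(1) by simp
  qed
  have "sign_var B Z = (\<Sum>\<theta>\<in>B \<rightarrow>\<^sub>E {-1,1}. (Zs \<theta>)\<^sup>2) / real (card (B \<rightarrow>\<^sub>E ({-1,1}::real set)))"
  proof -
    have "(\<Sum>\<theta>\<in>B \<rightarrow>\<^sub>E {-1,1}. (Z \<theta> - sign_avg B Z)\<^sup>2) = (\<Sum>\<theta>\<in>B \<rightarrow>\<^sub>E {-1,1}. (Zs \<theta>)\<^sup>2)"
      by (rule sum.cong[OF refl]) (simp add: Zeq avg)
    then show ?thesis unfolding sign_var_def sign_avg_def[of B "\<lambda>\<theta>. (Z \<theta> - sign_avg B Z)\<^sup>2"] by simp
  qed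
  also have "\<dots> \<le> 2 * (\<Sum>K\<in>B. \<Sum>L\<in>B. (aa K L)\<^sup>2)"
    using VA(2) cpos by (simp add: divide_le_eq mult.commute Zs_def)
  also have "\<dots> \<le> 2 * (C\<^sup>2 * (real (card B) / 2^N) powr (1/p + 1) * 2 powr (- real N / qq))"
    using total_bound by simp
  also have "real (card B) / 2^N = measure lborel (\<Union>K\<in>B. dyint K)"
    using measure_union[OF BN fin] by simp
  finally show ?thesis using avg qq by (simp add: mult_ac)
qed

end
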